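(* Let $\Gamma$ be a complete dominance graph on vertex set $\{1,\dots,n\}$ with graph Laplacian $L$. Let $\tilde{\Gamma}$ be obtained from $\Gamma$ either by deleting an edge of $\Gamma$ (of weight $w$) or by adding an edge $(i,j)$ with weight $w\in[0,1]$, where $(i,j)\notin E$, and let $\tilde{L}$ be the graph Laplacian of $\tilde{\Gamma}$. Then $\mathrm{hd}(L,\tilde{L})=w$.
   Context: For a weighted digraph with weights $w_{ij}\ge 0$ ($w_{ij}=0$ iff $(i,j)$ is not an edge), $d^{+}(i)=\sum_j w_{ij}$, $D=\mathrm{diag}(d^{+}(1),\dots,d^{+}(n))$, $A=[w_{ij}]$, and the graph Laplacian is $L=D-A$. A complete dominance graph is an acyclic tournament (for each pair of distinct vertices exactly one of $(i,j),(j,i)$ is an edge) in which every edge has weight $1$. For $n\times n$ complex matrices $M,\tilde{M}$ with eigenvalues $\lambda_1,\dots,\lambda_n$ and $\tilde\lambda_1,\dots,\tilde\lambda_n$, the spectral variation is $\mathrm{sv}(M,\tilde M)=\max_i\min_j|\tilde\lambda_i-\lambda_j|$ and the Hausdorff distance is $\mathrm{hd}(M,\tilde M)=\max\{\mathrm{sv}(M,\tilde M),\mathrm{sv}(\tilde M,M)\}$. *)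

theory Defs
  imports Complex_Main "Jordan_Normal_Form.Char_Poly"
begin

text \<open>Weighted digraphs on vertex set {0..<n} (the paper's {1..n}, shifted),
  given by a weight function w, with w i j = 0 iff (i,j) is not an edge.\<close>

definition out_deg :: "nat \<Rightarrow> (nat \<Rightarrow> nat \<Rightarrow> real) \<Rightarrow> nat \<Rightarrow> real" where
  "out_deg n w i = (\<Sum>j<n. w i j)"

definition laplacian :: "nat \<Rightarrow> (nat \<Rightarrow> nat \<Rightarrow> real) \<Rightarrow> complex mat" where
  "laplacian n w = mat n n (\<lambda>(i,j).
      complex_of_real ((if i = j then out_deg n w i else 0) - w i j))"

definition complete_dominance_graph :: "nat \<Rightarrow> (nat \<times> nat) set \<Rightarrow> bool" where
  "complete_dominance_graph n E \<longleftrightarrow>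
     E \<subseteq> {0..<n} \<times> {0..<n} \<and>
     (\<forall>i<n. \<forall>j<n. i \<noteq> j \<longrightarrow> ((i,j) \<in> E \<longleftrightarrow> (j,i) \<notin> E)) \<and>
     (\<forall>i. (i,i) \<notin> E) \<and>
     acyclic E"

definition edge_weights :: "(nat \<times> nat) set \<Rightarrow> nat \<Rightarrow> nat \<Rightarrow> real" where
  "edge_weights E i j = (if (i,j) \<in> E then 1 else 0)"

definition eigvals :: "complex mat \<Rightarrow> complex set" where
  "eigvals M = {z. eigenvalue M z}"

definition spectral_variation :: "complex mat \<Rightarrow> complex mat \<Rightarrow> real" where
  "spectral_variation M M' =
     Max ((\<lambda>m. Min ((\<lambda>l. cmod (m - l)) ` eigvals M)) ` eigvals M')"

definition hausdorff_dist :: "complex mat \<Rightarrow> complex mat \<Rightarrow> real" where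
  "hausdorff_dist M M' = max (spectral_variation M M') (spectral_variation M' M)"

end

theory Submission
  imports Defs
begin

definition rk :: "(nat \<times> nat) set \<Rightarrow> nat \<Rightarrow> nat" where
  "rk E i = card {j. (i,j) \<in> E}"

lemma cdg_sub: "complete_dominance_graph n E \<Longrightarrow> (i,j) \<in> E \<Longrightarrow> i < n \<and> j < n"
  unfolding complete_dominance_graph_def by (meson atLeastLessThan_iff mem_Sigma_iff subsetD)

lemma cdg_irr: "complete_dominance_graph n E \<Longrightarrow> (i,i) \<notin> E"
  unfolding complete_dominance_graph_def by blast

lemma cdg_tour: "complete_dominance_graph n E \<Longrightarrow> i < n \<Longrightarrow> j < n \<Longrightarrow> i \<noteq> j \<Longrightarrow> (i,j) \<notin> E \<Longrightarrow> (j,i) \<in> E"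
  unfolding complete_dominance_graph_def by blast

lemma cdg_acyc: "complete_dominance_graph n E \<Longrightarrow> acyclic E"
  unfolding complete_dominance_graph_def by blast

lemma cdg_trans:
  assumes "complete_dominance_graph n E" "(i,j) \<in> E" "(j,k) \<in> E"
  shows "(i,k) \<in> E"
proof -
  have ac: "acyclic E" using cdg_acyc[OF assms(1)] .
  have ik: "i < n" "k < n" using cdg_sub[OF assms(1)] assms(2,3) by auto
  have 1: "(i,k) \<in> E\<^sup>+" using trancl_trans[OF r_into_trancl[OF assms(2)] r_into_trancl[OF assms(3)]] .
  have "i \<noteq> k"
  proof
    assume "i = k"
    then have "(i,i) \<in> E\<^sup>+" using 1 by simp
    then show False using ac unfolding acyclic_def by blast
  qed
  moreover have "(k,i) \<notin> E"
  proof
    assume "(k,i) \<in> E"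
    then have "(i,i) \<in> E\<^sup>+" using trancl_trans[OF 1 r_into_trancl] by blast
    then show False using ac unfolding acyclic_def by blast
  qed
  ultimately show ?thesis using cdg_tour[OF assms(1) ik] by blast
qed

lemma cdg_fin: assumes "complete_dominance_graph n E" shows "finite {j. (i,j) \<in> E}"
proof -
  have "{j. (i,j) \<in> E} \<subseteq> {0..<n}" using cdg_sub[OF assms] by auto
  then show ?thesis using finite_subset by blast
qed

lemma rk_edge: assumes "complete_dominance_graph n E" "(i,j) \<in> E"
  shows "rk E j < rk E i"
proof -
  have "{k. (j,k) \<in> E} \<subset> {k. (i,k) \<in> E}"
  proof
    show "{k. (j,k) \<in> E} \<subseteq> {k. (i,k) \<in> E}" using cdg_trans[OF assms(1) assms(2)] by blast
    have "(j,j) \<notin> E" using cdg_irr[OF assms(1)] .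
    then show "{k. (j,k) \<in> E} \<noteq> {k. (i,k) \<in> E}" using assms(2) by blast
  qed
  then show ?thesis unfolding rk_def using cdg_fin[OF assms(1)] psubset_card_mono by blast
qed

lemma rk_iff: assumes "complete_dominance_graph n E" "i < n" "j < n"
  shows "(i,j) \<in> E \<longleftrightarrow> rk E j < rk E i"
proof
  assume "(i,j) \<in> E" then show "rk E j < rk E i" using rk_edge assms by blast
next
  assume h: "rk E j < rk E i"
  show "(i,j) \<in> E"
  proof (rule ccontr)
    assume "(i,j) \<notin> E"
    moreover have "i \<noteq> j" using h by auto
    ultimately have "(j,i) \<in> E" using cdg_tour[OF assms] by blast
    then have "rk E i < rk E j" using rk_edge[OF assms(1)] by blast
    then show False using h by simp
  qed
qed

lemma rk_inj: assumes "complete_dominance_graph n E" shows "inj_on (rk E) {0..<n}"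
proof (rule inj_onI)
  fix i j assume ij: "i \<in> {0..<n}" "j \<in> {0..<n}" and eq: "rk E i = rk E j"
  show "i = j"
  proof (rule ccontr)
    assume ne: "i \<noteq> j"
    have "(i,j) \<in> E \<or> (j,i) \<in> E" using cdg_tour[OF assms _ _ ne] ij by auto
    then show False using rk_edge[OF assms] eq by (metis less_irrefl)
  qed
qed

lemma rk_lt: assumes "complete_dominance_graph n E" "i < n" shows "rk E i < n"
proof -
  have "{j. (i,j) \<in> E} \<subseteq> {0..<n} - {i}" using cdg_sub[OF assms(1)] cdg_irr[OF assms(1)] by auto
  then have "rk E i \<le> card ({0..<n} - {i})" unfolding rk_def by (simp add: card_mono)
  also have "\<dots> = n - 1" using assms(2) by simp
  finally show ?thesis using assms(2) by linarith
qed

lemma rk_img: assumes "complete_dominance_graph n E" shows "rk E ` {0..<n} = {0..<n}"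
proof -
  have "rk E ` {0..<n} \<subseteq> {0..<n}" using rk_lt[OF assms] by auto
  moreover have "card (rk E ` {0..<n}) = n" using card_image[OF rk_inj[OF assms]] by simp
  ultimately show ?thesis by (simp add: card_subset_eq)
qed

lemma rk_bij: assumes "complete_dominance_graph n E" shows "bij_betw (rk E) {0..<n} {0..<n}"
  using rk_inj[OF assms] rk_img[OF assms] by (simp add: bij_betw_def)

lemma out_deg_E: assumes "complete_dominance_graph n E" "i < n"
  shows "out_deg n (edge_weights E) i = real (rk E i)"
proof -
  have "out_deg n (edge_weights E) i = (\<Sum>j\<in>{..<n}. if (i,j) \<in> E then 1 else 0)"
    unfolding out_deg_def edge_weights_def by simp
  also have "\<dots> = real (card {j\<in>{..<n}. (i,j) \<in> E})"
    by (simp add: sum.If_cases Int_def)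
  also have "{j\<in>{..<n}. (i,j) \<in> E} = {j. (i,j) \<in> E}"
    using cdg_sub[OF assms(1)] by auto
  finally show ?thesis unfolding rk_def .
qed

lemma det_rank_tri:
  fixes A :: "'a::comm_ring_1 mat" and f :: "nat \<Rightarrow> nat"
  assumes A: "A \<in> carrier_mat n n" and inj: "inj_on f {0..<n}"
    and z: "\<And>i j. i<n \<Longrightarrow> j<n \<Longrightarrow> f i < f j \<Longrightarrow> A$$(i,j) = 0"
  shows "det A = (\<Prod>i=0..<n. A$$(i,i))"
proof -
  have key: "(\<Prod>i=0..<n. A$$(i,p i)) = 0" if p: "p permutes {0..<n}" "p \<noteq> id" for p
  proof -
    have "\<exists>i<n. f i < f (p i)"
    proof (rule ccontr)
      assume "\<not> ?thesis"
      hence le: "\<And>i. i \<in> {0..<n} \<Longrightarrow> f (p i) \<le> f i" by auto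
      have "sum (\<lambda>i. f (p i)) {0..<n} = sum f {0..<n}"
        using sum.reindex[of p "{0..<n}" f] permutes_inj_on[OF p(1)] permutes_image[OF p(1)] by simp
      hence eq: "\<And>i. i \<in> {0..<n} \<Longrightarrow> f (p i) = f i" by (rule sum_mono_inv[OF _ le]) auto
      have "p x = x" for x
      proof (cases "x < n")
        case True
        then have "p x \<in> {0..<n}" using permutes_in_image[OF p(1)] by auto
        then show ?thesis using eq[of x] True inj unfolding inj_on_def by auto
      next
        case False then show ?thesis using p(1) unfolding permutes_def by auto
      qed
      then show False using p(2) by auto
    qed
    then obtain i where i: "i < n" "f i < f (p i)" by blast
    have "p i < n" using permutes_in_image[OF p(1)] i by auto
    then have "A$$(i, p i) = 0" using z i by auto
    then show ?thesis using i by (intro prod_zero) auto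
  qed
  have "det A = (\<Sum>p\<in>{p. p permutes {0..<n}}. signof p * (\<Prod>i=0..<n. A$$(i,p i)))"
    using det_def'[OF A] .
  also have "\<dots> = signof (id::nat\<Rightarrow>nat) * (\<Prod>i=0..<n. A$$(i,id i))
     + (\<Sum>p\<in>{p. p permutes {0..<n}} - {id}. signof p * (\<Prod>i=0..<n. A$$(i,p i)))"
    by (rule sum.remove) (auto simp: permutes_id finite_permutations)
  also have "(\<Sum>p\<in>{p. p permutes {0..<n}} - {id}. signof p * (\<Prod>i=0..<n. A$$(i,p i))) = 0"
    by (rule sum.neutral) (auto simp: key)
  finally have "det A = signof (id::nat\<Rightarrow>nat) * (\<Prod>i=0..<n. A$$(i,id i)) + 0" .
  moreover have "signof (id::nat\<Rightarrow>nat) = (1::'a)" by (simp add: sign_id)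
  ultimately show ?thesis by (simp only: id_apply mult_1_left add_0_right)
qed

lemma lap_carrier: "laplacian n w \<in> carrier_mat n n"
  unfolding laplacian_def by simp

lemma lap_entry: "i < n \<Longrightarrow> j < n \<Longrightarrow>
  laplacian n w $$ (i,j) = complex_of_real ((if i = j then out_deg n w i else 0) - w i j)"
  unfolding laplacian_def by simp

lemma char_entry: "M \<in> carrier_mat n n \<Longrightarrow> i < n \<Longrightarrow> j < n \<Longrightarrow>
  char_matrix M z $$ (i,j) = M $$ (i,j) - (if i = j then z else 0)"
  unfolding char_matrix_def by auto

lemma eig_from_det:
  assumes M: "M \<in> carrier_mat n n" and d: "\<And>z. det (char_matrix M z) = (\<Prod>i=0..<n. g i - z)"
  shows "eigvals M = g ` {0..<n}"
proof -
  have "eigvals M = {z. det (char_matrix M z) = 0}"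
    unfolding eigvals_def using eigenvalue_det[OF M] by auto
  also have "\<dots> = {z. \<exists>i\<in>{0..<n}. g i - z = 0}" unfolding d by (simp add: prod_zero_iff)
  also have "\<dots> = g ` {0..<n}" by force
  finally show ?thesis .
qed

lemma eig_tri:
  fixes M :: "complex mat" and f :: "nat \<Rightarrow> nat"
  assumes M: "M \<in> carrier_mat n n" and inj: "inj_on f {0..<n}"
    and z: "\<And>i j. i<n \<Longrightarrow> j<n \<Longrightarrow> f i < f j \<Longrightarrow> M$$(i,j) = 0"
  shows "eigvals M = (\<lambda>i. M$$(i,i)) ` {0..<n}"
proof (rule eig_from_det[OF M])
  fix z
  have "det (char_matrix M z) = (\<Prod>i=0..<n. char_matrix M z $$ (i,i))"
  proof (rule det_rank_tri[where f=f])
    show "inj_on f {0..<n}" using inj .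
    show "char_matrix M z \<in> carrier_mat n n" using M by simp
    fix i j assume "i < n" "j < n" "f i < f j"
    then show "char_matrix M z $$ (i, j) = 0" using char_entry[OF M] z by auto
  qed
  also have "\<dots> = (\<Prod>i=0..<n. M $$ (i,i) - z)"
    by (rule prod.cong) (auto simp: char_entry[OF M])
  finally show "det (char_matrix M z) = (\<Prod>i=0..<n. M $$ (i,i) - z)" .
qed

lemma eig_L:
  assumes cdg: "complete_dominance_graph n E"
  shows "eigvals (laplacian n (edge_weights E)) = of_nat ` {0..<n}"
proof -
  have "eigvals (laplacian n (edge_weights E)) = (\<lambda>i. laplacian n (edge_weights E) $$ (i,i)) ` {0..<n}"
  proof (rule eig_tri[OF lap_carrier rk_inj[OF cdg]])
    fix i j assume ij: "i < n" "j < n" "rk E i < rk E j"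
    then have "(i,j) \<notin> E" "i \<noteq> j" using rk_iff[OF cdg ij(1,2)] by auto
    then show "laplacian n (edge_weights E) $$ (i, j) = 0" using ij by (simp add: lap_entry edge_weights_def)
  qed
  also have "\<dots> = (\<lambda>i. of_nat (rk E i)) ` {0..<n}"
    by (rule image_cong) (auto simp: lap_entry out_deg_E[OF cdg] edge_weights_def cdg_irr[OF cdg])
  also have "\<dots> = of_nat ` (rk E ` {0..<n})" by (simp add: image_image)
  finally show ?thesis using rk_img[OF cdg] by simp
qed

lemma sum_upd: "finite A \<Longrightarrow> b \<in> A \<Longrightarrow> sum (f(b := x)) A = sum f A - f b + (x::real)"
  by (simp add: sum.remove)

lemma eig_del:
  assumes cdg: "complete_dominance_graph n E" and ab: "(a,b) \<in> E"
    and w': "w' = (edge_weights E)(a := (edge_weights E a)(b := 0))"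
  shows "eigvals (laplacian n w') = of_nat ` ({0..<n} - {rk E a})"
proof -
  have abn: "a < n" "b < n" using cdg_sub[OF cdg ab] by auto
  have w'e: "w' i j = (if (i,j) \<in> E \<and> (i,j) \<noteq> (a,b) then 1 else 0)" for i j
    unfolding w' edge_weights_def by auto
  have od: "out_deg n w' i = real (rk E i) - (if i = a then 1 else 0)" if "i < n" for i
  proof (cases "i = a")
    case True
    have "out_deg n w' i = sum ((edge_weights E a)(b := 0)) {..<n}"
      unfolding out_deg_def w' True by simp
    also have "\<dots> = sum (edge_weights E a) {..<n} - edge_weights E a b + 0"
      by (rule sum_upd) (use abn in auto)
    also have "\<dots> = out_deg n (edge_weights E) a - 1"
      using ab by (simp add: out_deg_def edge_weights_def)
    finally show ?thesis using out_deg_E[OF cdg abn(1)] True by simp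
  next
    case False
    then have "out_deg n w' i = out_deg n (edge_weights E) i" unfolding out_deg_def w' by simp
    then show ?thesis using out_deg_E[OF cdg that] False by simp
  qed
  have "eigvals (laplacian n w') = (\<lambda>i. laplacian n w' $$ (i,i)) ` {0..<n}"
  proof (rule eig_tri[OF lap_carrier rk_inj[OF cdg]])
    fix i j assume ij: "i < n" "j < n" "rk E i < rk E j"
    then have "(i,j) \<notin> E" "i \<noteq> j" using rk_iff[OF cdg ij(1,2)] by auto
    then show "laplacian n w' $$ (i, j) = 0" using ij by (simp add: lap_entry w'e)
  qed
  also have "\<dots> = (\<lambda>i. (of_nat (rk E i) :: complex) - (if i = a then 1 else 0)) ` {0..<n}"
    by (rule image_cong) (auto simp: lap_entry od w'e cdg_irr[OF cdg])
  also have "\<dots> = of_nat ` ({0..<n} - {rk E a})"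
  proof
    have pa: "rk E b < rk E a" using rk_edge[OF cdg ab] .
    show "(\<lambda>i. (of_nat (rk E i) :: complex) - (if i = a then 1 else 0)) ` {0..<n} \<subseteq> of_nat ` ({0..<n} - {rk E a})"
    proof
      fix x assume "x \<in> (\<lambda>i. (of_nat (rk E i) :: complex) - (if i = a then 1 else 0)) ` {0..<n}"
      then obtain i where i: "i < n" "x = of_nat (rk E i) - (if i = a then 1 else 0)" by auto
      show "x \<in> of_nat ` ({0..<n} - {rk E a})"
      proof (cases "i = a")
        case True
        have "1 \<le> rk E a" using pa by simp
        then have "of_nat (rk E a - 1) = (of_nat (rk E a) - 1 :: complex)" by (metis of_nat_1 of_nat_diff)
        then have "x = of_nat (rk E a - 1)" using i True by simp
        moreover have "rk E a - 1 \<in> {0..<n} - {rk E a}" using pa rk_lt[OF cdg abn(1)] by auto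
        ultimately show ?thesis by blast
      next
        case False
        then have "rk E i \<noteq> rk E a" using rk_inj[OF cdg] i abn unfolding inj_on_def by auto
        then show ?thesis using i False rk_lt[OF cdg i(1)] by auto
      qed
    qed
    show "(of_nat ` ({0..<n} - {rk E a}) :: complex set) \<subseteq> (\<lambda>i. (of_nat (rk E i) :: complex) - (if i = a then 1 else 0)) ` {0..<n}"
    proof
      fix x assume "x \<in> (of_nat ` ({0..<n} - {rk E a}) :: complex set)"
      then obtain k where k: "k < n" "k \<noteq> rk E a" "x = of_nat k" by force
      then obtain i where i: "i < n" "rk E i = k" using rk_img[OF cdg] by (metis atLeastLessThan_iff imageE zero_le)
      then have "i \<noteq> a" using k by auto
      then show "x \<in> (\<lambda>i. (of_nat (rk E i) :: complex) - (if i = a then 1 else 0)) ` {0..<n}" using i k by force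
    qed
  qed
  finally show ?thesis .
qed

lemma mat_mult_real: "i < n \<Longrightarrow> j < n \<Longrightarrow>
  (mat n n (\<lambda>(i,j). complex_of_real (fa i j)) * mat n n (\<lambda>(i,j). complex_of_real (fb i j))) $$ (i,j)
   = of_real (\<Sum>l=0..<n. fa i l * fb l j)"
  by (simp add: scalar_prod_def of_real_sum)

lemma sum_rk: "complete_dominance_graph n E \<Longrightarrow> (\<Sum>l=0..<n. h (rk E l)) = (\<Sum>k=0..<n. h k)"
  using sum.reindex_bij_betw[OF rk_bij] by blast

lemma count_between: assumes "x \<le> n"
  shows "(\<Sum>k=0..<n. if k < x \<and> y \<le> k then (1::real) else 0) = real (x - y)"
proof -
  have "(\<Sum>k=0..<n. if k < x \<and> y \<le> k then (1::real) else 0) = real (card ({0..<n} \<inter> {k. k < x \<and> y \<le> k}))"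
    by (simp add: sum.If_cases)
  also have "{0..<n} \<inter> {k. k < x \<and> y \<le> k} = {y..<x}" using assms by auto
  finally show ?thesis by simp
qed

lemma char_mult_comm:
  fixes A U M :: "complex mat"
  assumes A: "A \<in> carrier_mat n n" and U: "U \<in> carrier_mat n n" and M: "M \<in> carrier_mat n n"
    and k: "A * U = U * M"
  shows "char_matrix A z * U = U * char_matrix M z"
proof -
  have "char_matrix A z * U = A * U + ((-z) \<cdot>\<^sub>m 1\<^sub>m n) * U"
    unfolding char_matrix_def using A U by (simp add: add_mult_distrib_mat[of _ n n])
  also have "\<dots> = A * U + (-z) \<cdot>\<^sub>m U" using U by (simp add: mult_smult_assoc_mat[of _ n n])
  also have "\<dots> = U * M + U * ((-z) \<cdot>\<^sub>m 1\<^sub>m n)" using U mult_smult_distrib[where A=U and B="1\<^sub>m n" and k="-z" and nr=n and n=n and nc=n] by (simp add: k)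
  also have "\<dots> = U * char_matrix M z"
    unfolding char_matrix_def using M U by (simp add: mult_add_distrib_mat[of _ n n])
  finally show ?thesis .
qed

lemma eig_add:
  assumes cdg: "complete_dominance_graph n E" and an: "a < n" and bn: "b < n" and ne: "a \<noteq> b"
    and nab: "(a,b) \<notin> E"
    and w': "w' = (edge_weights E)(a := (edge_weights E a)(b := c))"
  shows "eigvals (laplacian n w') = of_nat ` ({0..<n} - {Suc (rk E a)}) \<union> {of_real (real (rk E a) + 1 + c)}"
proof -
  define r where "r = rk E"
  define p where "p = r a"
  define q where "q = r b"
  have ba: "(b,a) \<in> E" using cdg_tour[OF cdg an bn ne nab] .
  have pq: "p < q" unfolding p_def q_def r_def using rk_edge[OF cdg ba] .
  have qn: "q < n" unfolding q_def r_def using rk_lt[OF cdg bn] .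
  have rn: "\<And>i. i < n \<Longrightarrow> r i < n" unfolding r_def using rk_lt[OF cdg] .
  obtain a' where a': "a' < n" "r a' = Suc p"
  proof -
    have "Suc p \<in> r ` {0..<n}" unfolding r_def rk_img[OF cdg] using pq qn by auto
    then show ?thesis using that by auto
  qed
  have uniq: "\<And>i j. i < n \<Longrightarrow> j < n \<Longrightarrow> r i = r j \<Longrightarrow> i = j"
    using rk_inj[OF cdg] unfolding r_def inj_on_def by auto
  have ra: "\<And>i. i < n \<Longrightarrow> r i = p \<longleftrightarrow> i = a" using uniq an unfolding p_def by blast
  have ra': "\<And>i. i < n \<Longrightarrow> r i = Suc p \<longleftrightarrow> i = a'" using uniq a' by metis
  have aa': "a \<noteq> a'" using a' p_def by auto
  have riff: "\<And>i j. i < n \<Longrightarrow> j < n \<Longrightarrow> (i,j) \<in> E \<longleftrightarrow> r j < r i"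
    unfolding r_def using rk_iff[OF cdg] by blast
  have w'e: "w' i j = (if (i,j) \<in> E then 1 else 0) + (if i = a \<and> j = b then c else 0)" for i j
    unfolding w' edge_weights_def using nab by auto
  have od: "out_deg n w' i = real (r i) + (if i = a then c else 0)" if "i < n" for i
  proof (cases "i = a")
    case True
    have "out_deg n w' i = sum ((edge_weights E a)(b := c)) {..<n}"
      unfolding out_deg_def w' True by simp
    also have "\<dots> = sum (edge_weights E a) {..<n} - edge_weights E a b + c"
      by (rule sum_upd) (use bn in auto)
    also have "\<dots> = out_deg n (edge_weights E) a + c"
      using nab by (simp add: out_deg_def edge_weights_def)
    finally show ?thesis using out_deg_E[OF cdg an] True unfolding r_def by simp
  next
    case False
    then have "out_deg n w' i = out_deg n (edge_weights E) i" unfolding out_deg_def w' by simp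
    then show ?thesis using out_deg_E[OF cdg that] False unfolding r_def by simp
  qed
  define lt where "lt i j = (if i = j then real (r i) + (if i = a then c else 0) else 0)
      - ((if r j < r i then 1 else 0) + (if i = a \<and> j = b then c else 0))" for i j
  have Leq: "laplacian n w' = mat n n (\<lambda>(i,j). complex_of_real (lt i j))"
  proof (rule eq_matI)
    fix i j assume "i < dim_row (mat n n (\<lambda>(i,j). complex_of_real (lt i j)))"
      "j < dim_col (mat n n (\<lambda>(i,j). complex_of_real (lt i j)))"
    then have ij: "i < n" "j < n" by auto
    show "laplacian n w' $$ (i,j) = mat n n (\<lambda>(i,j). complex_of_real (lt i j)) $$ (i,j)"
      using ij by (simp add: lap_entry od w'e riff lt_def)
  qed (auto simp: laplacian_def)
  define chi where "chi j = (if p < r j \<and> r j \<le> q then 1 else 0 :: real)" for j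
  define sg where "sg i = (if i = a then 1 else if i = a' then -1 else 0 :: real)" for i
  define fU where "fU i j = (if r j \<le> r i then 1 else 0 :: real)" for i j
  define fM where "fM i j = (if i = j then real (r i) else 0) - c * sg i * chi j" for i j
  define U where "U = mat n n (\<lambda>(i,j). complex_of_real (fU i j))"
  define M where "M = mat n n (\<lambda>(i,j). complex_of_real (fM i j))"
  have Uc: "U \<in> carrier_mat n n" and Mc: "M \<in> carrier_mat n n" unfolding U_def M_def by auto
  have Lc: "laplacian n w' \<in> carrier_mat n n" by (rule lap_carrier)
  have lhs: "(\<Sum>l=0..<n. lt i l * fU l j) = (if r j \<le> r i then real (r j) else 0) - c * (if i = a then chi j else 0)"
    if ij: "i < n" "j < n" for i j
  proof -
    have "(\<Sum>l=0..<n. lt i l * fU l j) = (\<Sum>l=0..<n. (if i = l then (real (r i) + (if i = a then c else 0)) * fU i j else 0)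
        - (if r l < r i \<and> r j \<le> r l then 1 else 0) - (if l = b then (if i = a then c else 0) * fU b j else 0))"
      by (rule sum.cong) (auto simp: lt_def fU_def)
    also have "\<dots> = (\<Sum>l=0..<n. (if i = l then (real (r i) + (if i = a then c else 0)) * fU i j else 0))
        - (\<Sum>l=0..<n. (if r l < r i \<and> r j \<le> r l then 1 else 0)) - (\<Sum>l=0..<n. (if l = b then (if i = a then c else 0) * fU b j else 0))"
      by (simp add: sum_subtractf)
    also have "(\<Sum>l=0..<n. (if r l < r i \<and> r j \<le> r l then 1 else 0)) = (\<Sum>k=0..<n. (if k < r i \<and> r j \<le> k then 1 else (0::real)))"
      using sum_rk[OF cdg, of "\<lambda>k. if k < r i \<and> r j \<le> k then 1 else (0::real)"] unfolding r_def by simp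
    also have "\<dots> = real (r i - r j)" using count_between rn[OF ij(1)] by simp
    also have "(\<Sum>l=0..<n. (if i = l then (real (r i) + (if i = a then c else 0)) * fU i j else 0))
        = (real (r i) + (if i = a then c else 0)) * fU i j" using ij(1) by simp
    also have "(\<Sum>l=0..<n. (if l = b then (if i = a then c else 0) * fU b j else 0)) = (if i = a then c else 0) * fU b j"
      using bn by simp
    finally have eq: "(\<Sum>l=0..<n. lt i l * fU l j) = (real (r i) + (if i = a then c else 0)) * fU i j - real (r i - r j)
       - (if i = a then c else 0) * fU b j" .
    show ?thesis
    proof (cases "i = a")
      case True
      then show ?thesis unfolding eq using pq by (auto simp: fU_def chi_def p_def q_def of_nat_diff)
    next
      case False
      then show ?thesis unfolding eq by (auto simp: fU_def of_nat_diff)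
    qed
  qed
  have rhs: "(\<Sum>l=0..<n. fU i l * fM l j) = (if r j \<le> r i then real (r j) else 0) - c * (if i = a then chi j else 0)"
    if ij: "i < n" "j < n" for i j
  proof -
    have "(\<Sum>l=0..<n. fU i l * fM l j) = (\<Sum>l=0..<n. (if l = j then fU i j * real (r j) else 0)
        - c * chi j * ((if l = a then fU i a else 0) - (if l = a' then fU i a' else 0)))"
      by (rule sum.cong) (auto simp: fM_def sg_def aa' algebra_simps)
    also have "\<dots> = fU i j * real (r j) - c * chi j * (fU i a - fU i a')"
      using ij an a' by (simp add: sum_subtractf sum_distrib_left[symmetric])
    also have "fU i a - fU i a' = (if i = a then 1 else 0)"
      using ra[OF ij(1)] a' unfolding fU_def p_def by auto
    finally show ?thesis by (simp add: fU_def)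
  qed
  have key: "laplacian n w' * U = U * M"
  proof (rule eq_matI)
    fix i j assume "i < dim_row (U * M)" "j < dim_col (U * M)"
    then have ij: "i < n" "j < n" unfolding U_def M_def by auto
    show "(laplacian n w' * U) $$ (i, j) = (U * M) $$ (i, j)"
      unfolding Leq U_def M_def mat_mult_real[OF ij] using lhs[OF ij] rhs[OF ij] by simp
  qed (auto simp: U_def M_def Leq)
  have detU: "det U = 1"
  proof -
    have "det U = (\<Prod>i=0..<n. U $$ (i,i))"
    proof (rule det_rank_tri[where f=r, OF Uc])
      show "inj_on r {0..<n}" unfolding r_def using rk_inj[OF cdg] .
      fix i j assume "i < n" "j < n" "r i < r j" then show "U $$ (i,j) = 0" by (simp add: U_def fU_def)
    qed
    also have "\<dots> = 1" by (rule prod.neutral) (simp add: U_def fU_def)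
    finally show ?thesis .
  qed
  have "eigvals (laplacian n w') = eigvals M"
  proof -
    have "det (char_matrix (laplacian n w') z) = det (char_matrix M z)" for z
    proof -
      have "det (char_matrix (laplacian n w') z) * det U = det U * det (char_matrix M z)"
        using char_mult_comm[OF Lc Uc Mc key, of z] det_mult[of _ n, OF _ Uc] det_mult[of U n, OF Uc]
        by (metis Lc Mc char_matrix_closed)
      then show ?thesis using detU by simp
    qed
    then show ?thesis unfolding eigvals_def eigenvalue_det[OF Lc] eigenvalue_det[OF Mc] by simp
  qed
  also have "eigvals M = (\<lambda>i. M $$ (i,i)) ` {0..<n}"
  proof (rule eig_tri[where f="\<lambda>i. n - r i", OF Mc])
    show "inj_on (\<lambda>i. n - r i) {0..<n}" using uniq rn by (intro inj_onI) (metis atLeastLessThan_iff diff_diff_cancel less_imp_le)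
    fix i j assume ij: "i < n" "j < n" "n - r i < n - r j"
    then have lt: "r j < r i" using rn[OF ij(1)] rn[OF ij(2)] by linarith
    then have "i \<noteq> j" by auto
    moreover have "sg i * chi j = 0"
      using lt ra[OF ij(1)] ra'[OF ij(1)] unfolding sg_def chi_def by auto
    ultimately show "M $$ (i,j) = 0" using ij by (simp add: M_def fM_def)
  qed
  also have "(\<lambda>i. M $$ (i,i)) ` {0..<n} = (\<lambda>i. of_nat (r i) + (if i = a' then of_real c else 0)) ` {0..<n}"
  proof (rule image_cong)
    fix i assume i: "i \<in> {0..<n}"
    have "sg i * chi i = (if i = a' then -1 else 0)"
      using ra[of i] ra'[of i] i a' pq unfolding sg_def chi_def p_def by auto
    then have "fM i i = real (r i) + (if i = a' then c else 0)"
      unfolding fM_def by (simp add: mult.assoc)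
    then show "M $$ (i,i) = of_nat (r i) + (if i = a' then of_real c else 0)"
      using i by (simp add: M_def)
  qed simp
  also have "\<dots> = of_nat ` ({0..<n} - {Suc (rk E a)}) \<union> {of_real (real (rk E a) + 1 + c)}"
  proof
    show "(\<lambda>i. of_nat (r i) + (if i = a' then of_real c else 0)) ` {0..<n}
        \<subseteq> of_nat ` ({0..<n} - {Suc (rk E a)}) \<union> {of_real (real (rk E a) + 1 + c)}"
    proof
      fix x assume "x \<in> (\<lambda>i. of_nat (r i) + (if i = a' then of_real c else 0)) ` {0..<n}"
      then obtain i where i: "i < n" "x = of_nat (r i) + (if i = a' then of_real c else 0)" by auto
      show "x \<in> of_nat ` ({0..<n} - {Suc (rk E a)}) \<union> {of_real (real (rk E a) + 1 + c)}"
      proof (cases "i = a'")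
        case True
        then show ?thesis using i a' unfolding p_def r_def by simp
      next
        case False
        then have "r i \<noteq> Suc p" using ra'[OF i(1)] by auto
        then show ?thesis using i False rn[OF i(1)] unfolding p_def r_def by auto
      qed
    qed
    show "(of_nat ` ({0..<n} - {Suc (rk E a)}) \<union> {of_real (real (rk E a) + 1 + c)} :: complex set)
        \<subseteq> (\<lambda>i. of_nat (r i) + (if i = a' then of_real c else 0)) ` {0..<n}"
    proof
      fix x :: complex assume "x \<in> of_nat ` ({0..<n} - {Suc (rk E a)}) \<union> {of_real (real (rk E a) + 1 + c)}"
      then consider "x = of_real (real (rk E a) + 1 + c)" | k where "k < n" "k \<noteq> Suc p" "x = of_nat k"
        unfolding p_def r_def by force
      then show "x \<in> (\<lambda>i. of_nat (r i) + (if i = a' then of_real c else 0)) ` {0..<n}"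
      proof cases
        case 1
        then have "x = of_nat (r a') + (if a' = a' then of_real c else 0)" using a' unfolding p_def r_def by simp
        then show ?thesis using a'(1) by (intro image_eqI[where x=a']) auto
      next
        case 2
        then obtain i where i: "i < n" "r i = k" using rk_img[OF cdg] unfolding r_def by (metis atLeastLessThan_iff imageE zero_le)
        then have "i \<noteq> a'" using 2 a' by auto
        then have "x = of_nat (r i) + (if i = a' then of_real c else 0)" using i 2 by simp
        then show ?thesis using i(1) by (intro image_eqI[where x=i]) auto
      qed
    qed
  qed
  finally show ?thesis .
qed

lemma hd_gen:
  fixes S S' :: "complex set" and c :: real
  assumes fS: "finite S" and fS': "finite S'" and nS: "S \<noteq> {}" and nS': "S' \<noteq> {}"
   and A: "\<And>m. m \<in> S' \<Longrightarrow> \<exists>l\<in>S. cmod (m - l) \<le> c"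
   and B: "\<And>m. m \<in> S \<Longrightarrow> \<exists>l\<in>S'. cmod (m - l) \<le> c"
   and C: "\<exists>m\<in>S. \<forall>l\<in>S'. c \<le> cmod (m - l)"
  shows "max (Max ((\<lambda>m. Min ((\<lambda>l. cmod (m - l)) ` S)) ` S')) (Max ((\<lambda>m. Min ((\<lambda>l. cmod (m - l)) ` S')) ` S)) = c"
proof -
  have 1: "Max ((\<lambda>m. Min ((\<lambda>l. cmod (m - l)) ` S)) ` S') \<le> c"
  proof (rule Max.boundedI)
    show "finite ((\<lambda>m. Min ((\<lambda>l. cmod (m - l)) ` S)) ` S')" using fS' by simp
    show "(\<lambda>m. Min ((\<lambda>l. cmod (m - l)) ` S)) ` S' \<noteq> {}" using nS' by simp
    fix y assume "y \<in> (\<lambda>m. Min ((\<lambda>l. cmod (m - l)) ` S)) ` S'"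
    then obtain m where m: "m \<in> S'" "y = Min ((\<lambda>l. cmod (m - l)) ` S)" by auto
    obtain l where "l \<in> S" "cmod (m - l) \<le> c" using A[OF m(1)] by auto
    then show "y \<le> c" unfolding m(2) using fS nS by (auto simp: Min_le_iff)
  qed
  have 2: "Max ((\<lambda>m. Min ((\<lambda>l. cmod (m - l)) ` S')) ` S) \<le> c"
  proof (rule Max.boundedI)
    show "finite ((\<lambda>m. Min ((\<lambda>l. cmod (m - l)) ` S')) ` S)" using fS by simp
    show "(\<lambda>m. Min ((\<lambda>l. cmod (m - l)) ` S')) ` S \<noteq> {}" using nS by simp
    fix y assume "y \<in> (\<lambda>m. Min ((\<lambda>l. cmod (m - l)) ` S')) ` S"
    then obtain m where m: "m \<in> S" "y = Min ((\<lambda>l. cmod (m - l)) ` S')" by auto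
    obtain l where "l \<in> S'" "cmod (m - l) \<le> c" using B[OF m(1)] by auto
    then show "y \<le> c" unfolding m(2) using fS' nS' by (auto simp: Min_le_iff)
  qed
  have 3: "c \<le> Max ((\<lambda>m. Min ((\<lambda>l. cmod (m - l)) ` S')) ` S)"
  proof -
    obtain m where m: "m \<in> S" "\<forall>l\<in>S'. c \<le> cmod (m - l)" using C by auto
    have "c \<le> Min ((\<lambda>l. cmod (m - l)) ` S')" using m(2) fS' nS' by (auto simp: Min_ge_iff)
    also have "\<dots> \<le> Max ((\<lambda>m. Min ((\<lambda>l. cmod (m - l)) ` S')) ` S)"
      using m(1) fS by (intro Max_ge) auto
    finally show ?thesis .
  qed
  show ?thesis using 1 2 3 by linarith
qed

lemma nat_dist: assumes "(k::nat) \<noteq> p" shows "1 \<le> \<bar>real p - real k\<bar>"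
proof (cases "k < p")
  case True
  then have "real k + 1 \<le> real p" by (metis Suc_leI of_nat_Suc of_nat_le_iff add.commute)
  then show ?thesis by simp
next
  case False
  then have "p < k" using assms by simp
  then have "real p + 1 \<le> real k" by (metis Suc_leI of_nat_Suc of_nat_le_iff add.commute)
  then show ?thesis by simp
qed

lemma cmod_nat: "cmod (of_nat x - of_nat y) = \<bar>real x - real y\<bar>"
  by (metis norm_of_real of_real_diff of_real_of_nat_eq)

lemma cmod_nat_real: "cmod (of_nat x - of_real y) = \<bar>real x - y\<bar>"
  by (metis norm_of_real of_real_diff of_real_of_nat_eq)

lemma cmod_real_nat: "cmod (of_real y - of_nat x) = \<bar>y - real x\<bar>"
  by (metis norm_of_real of_real_diff of_real_of_nat_eq)

lemma hd_del:
  assumes "1 \<le> p" "p < n"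
  shows "max (Max ((\<lambda>m. Min ((\<lambda>l. cmod (m - l)) ` (of_nat ` {0..<n}))) ` (of_nat ` ({0..<n} - {p}))))
     (Max ((\<lambda>m. Min ((\<lambda>l. cmod (m - l)) ` (of_nat ` ({0..<n} - {p})))) ` (of_nat ` {0..<n}))) = (1::real)"
proof (rule hd_gen)
  show "finite (of_nat ` {0..<n} :: complex set)" by simp
  show "finite (of_nat ` ({0..<n} - {p}) :: complex set)" by simp
  show "(of_nat ` {0..<n} :: complex set) \<noteq> {}" using assms by auto
  show "(of_nat ` ({0..<n} - {p}) :: complex set) \<noteq> {}"
  proof -
    have "p - 1 \<in> {0..<n} - {p}" using assms by auto
    then show ?thesis by blast
  qed
  fix m :: complex assume "m \<in> of_nat ` ({0..<n} - {p})"
  then show "\<exists>l\<in>of_nat ` {0..<n}. cmod (m - l) \<le> 1" by force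
next
  fix m :: complex assume "m \<in> of_nat ` {0..<n}"
  then obtain k where k: "k < n" "m = of_nat k" by auto
  show "\<exists>l\<in>of_nat ` ({0..<n} - {p}). cmod (m - l) \<le> 1"
  proof (cases "k = p")
    case True
    have "of_nat (p - 1) \<in> (of_nat ` ({0..<n} - {p}) :: complex set)"
      by (rule image_eqI[where x="p - 1"]) (use assms in auto)
    moreover have "cmod (m - of_nat (p - 1)) \<le> 1" using k True assms by (simp add: cmod_nat of_nat_diff)
    ultimately show ?thesis by blast
  next
    case False
    then show ?thesis using k by force
  qed
next
  show "\<exists>m\<in>of_nat ` {0..<n}. \<forall>l\<in>of_nat ` ({0..<n} - {p}). 1 \<le> cmod (m - l)"
  proof (rule bexI[where x="of_nat p"])
    show "\<forall>l\<in>of_nat ` ({0..<n} - {p}). 1 \<le> cmod (of_nat p - l)"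
    proof
      fix l :: complex assume "l \<in> of_nat ` ({0..<n} - {p})"
      then obtain k where "k \<noteq> p" "l = of_nat k" by auto
      then show "1 \<le> cmod (of_nat p - l)" using nat_dist[of k p] by (simp add: cmod_nat)
    qed
    show "of_nat p \<in> (of_nat ` {0..<n} :: complex set)" by (rule image_eqI[where x=p]) (use assms in auto)
  qed
qed

lemma hd_add:
  assumes "Suc p < n" "0 \<le> c" "c \<le> 1"
  shows "max (Max ((\<lambda>m. Min ((\<lambda>l. cmod (m - l)) ` (of_nat ` {0..<n}))) ` (of_nat ` ({0..<n} - {Suc p}) \<union> {of_real (real p + 1 + c)})))
     (Max ((\<lambda>m. Min ((\<lambda>l. cmod (m - l)) ` (of_nat ` ({0..<n} - {Suc p}) \<union> {of_real (real p + 1 + c)}))) ` (of_nat ` {0..<n}))) = c"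
proof (rule hd_gen)
  show "finite (of_nat ` {0..<n} :: complex set)" by simp
  show "finite (of_nat ` ({0..<n} - {Suc p}) \<union> {of_real (real p + 1 + c)} :: complex set)" by simp
  show "(of_nat ` {0..<n} :: complex set) \<noteq> {}" using assms by auto
  show "(of_nat ` ({0..<n} - {Suc p}) \<union> {of_real (real p + 1 + c)} :: complex set) \<noteq> {}" by simp
next
  fix m :: complex assume "m \<in> of_nat ` ({0..<n} - {Suc p}) \<union> {of_real (real p + 1 + c)}"
  then consider k where "k < n" "m = of_nat k" | "m = of_real (real p + 1 + c)" by auto
  then show "\<exists>l\<in>of_nat ` {0..<n}. cmod (m - l) \<le> c"
  proof cases
    case 1 then show ?thesis using assms by force
  next
    case 2
    have "cmod (m - of_nat (Suc p)) \<le> c" using 2 assms by (simp add: cmod_real_nat)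
    moreover have "(of_nat (Suc p) :: complex) \<in> of_nat ` {0..<n}"
      by (rule image_eqI[where x="Suc p"]) (use assms in auto)
    ultimately show ?thesis by blast
  qed
next
  fix m :: complex assume "m \<in> of_nat ` {0..<n}"
  then obtain k where k: "k < n" "m = of_nat k" by auto
  show "\<exists>l\<in>of_nat ` ({0..<n} - {Suc p}) \<union> {of_real (real p + 1 + c)}. cmod (m - l) \<le> c"
  proof (cases "k = Suc p")
    case True
    have "cmod (m - of_real (real p + 1 + c)) \<le> c" using k True assms by (simp add: cmod_nat_real)
    then show ?thesis by blast
  next
    case False
    then show ?thesis using k assms by force
  qed
next
  show "\<exists>m\<in>of_nat ` {0..<n}. \<forall>l\<in>of_nat ` ({0..<n} - {Suc p}) \<union> {of_real (real p + 1 + c)}. c \<le> cmod (m - l)"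
  proof (rule bexI[where x="of_nat (Suc p)"])
    show "\<forall>l\<in>of_nat ` ({0..<n} - {Suc p}) \<union> {of_real (real p + 1 + c)}. c \<le> cmod (of_nat (Suc p) - l)"
    proof
      fix l :: complex assume "l \<in> of_nat ` ({0..<n} - {Suc p}) \<union> {of_real (real p + 1 + c)}"
      then consider k where "k \<noteq> Suc p" "l = of_nat k" | "l = of_real (real p + 1 + c)" by auto
      then show "c \<le> cmod (of_nat (Suc p) - l)"
      proof cases
        case 1
        then have "1 \<le> \<bar>real (Suc p) - real k\<bar>" using nat_dist[of k "Suc p"] by blast
        then show ?thesis using 1 assms by (simp add: cmod_nat del: of_nat_Suc)
      next
        case 2 then show ?thesis using assms by (simp add: cmod_nat_real)
      qed
    qed
    show "of_nat (Suc p) \<in> (of_nat ` {0..<n} :: complex set)" by (rule image_eqI[where x="Suc p"]) (use assms in auto)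
  qed
qed

theorem theorem3p7:
  fixes n :: nat and E :: "(nat \<times> nat) set" and w' :: "nat \<Rightarrow> nat \<Rightarrow> real"
    and a b :: nat and c :: real
  assumes "complete_dominance_graph n E"
    and "((a,b) \<in> E \<and> c = edge_weights E a b \<and> w' = (edge_weights E)(a := (edge_weights E a)(b := 0)))
       \<or> (a < n \<and> b < n \<and> a \<noteq> b \<and> (a,b) \<notin> E \<and> 0 \<le> c \<and> c \<le> 1 \<and>
          w' = (edge_weights E)(a := (edge_weights E a)(b := c)))"
  shows "hausdorff_dist (laplacian n (edge_weights E)) (laplacian n w') = c"
  using assms(2)
proof
  assume h: "(a,b) \<in> E \<and> c = edge_weights E a b \<and> w' = (edge_weights E)(a := (edge_weights E a)(b := 0))"
  then have ab: "(a,b) \<in> E" and c1: "c = 1" and w'd: "w' = (edge_weights E)(a := (edge_weights E a)(b := 0))"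
    by (auto simp: edge_weights_def)
  have p1: "1 \<le> rk E a" using rk_edge[OF assms(1) ab] by simp
  have pn: "rk E a < n" using rk_lt[OF assms(1)] cdg_sub[OF assms(1) ab] by auto
  show ?thesis
    unfolding hausdorff_dist_def spectral_variation_def eig_L[OF assms(1)] eig_del[OF assms(1) ab w'd] c1
    by (rule hd_del[OF p1 pn])
next
  assume h: "a < n \<and> b < n \<and> a \<noteq> b \<and> (a,b) \<notin> E \<and> 0 \<le> c \<and> c \<le> 1 \<and>
          w' = (edge_weights E)(a := (edge_weights E a)(b := c))"
  then have an: "a < n" and bn: "b < n" and ne: "a \<noteq> b" and nab: "(a,b) \<notin> E" and c0: "0 \<le> c" and c1: "c \<le> 1"
    and w'd: "w' = (edge_weights E)(a := (edge_weights E a)(b := c))" by auto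
  have ba: "(b,a) \<in> E" using cdg_tour[OF assms(1) an bn ne nab] .
  have "Suc (rk E a) < n" using rk_edge[OF assms(1) ba] rk_lt[OF assms(1) bn] by simp
  then show ?thesis
    unfolding hausdorff_dist_def spectral_variation_def eig_L[OF assms(1)] eig_add[OF assms(1) an bn ne nab w'd]
    by (rule hd_add[OF _ c0 c1])
qed

end
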